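(* Let $L\in(\Sigma^4_{2,8})^\star$, $L\neq0$, and let $F=\langle L,q(a,b,c)^4\rangle\in\mathbb{R}[a,b,c]_4$. Then $F$ does not vanish at any real point $\xi=(\xi_1:\xi_2:\xi_3)\in\mathbb{P}^2(\mathbb{R})$ whose associated binary quadratic form $\xi_1x^2+\xi_2xy+\xi_3y^2$ is (positive or negative) definite.
   Context: Apolarity pairing on $\mathbb{R}[x,y]$: $\langle x^{\alpha_1}y^{\alpha_2},x^{\beta_1}y^{\beta_2}\rangle=\frac{\beta_1!\beta_2!}{\alpha_1!\alpha_2!}x^{\beta_1-\alpha_1}y^{\beta_2-\alpha_2}$ if $\alpha_i\le\beta_i$, and $0$ otherwise, extended bilinearly; for $L,f\in\mathbb{R}[x,y]_8$ this is a real number. $\Sigma^4_{2,8}\subset\mathbb{R}[x,y]_8$ is the cone of finite sums of fourth powers of real binary quadratic forms and $(\Sigma^4_{2,8})^\star=\{L\in\mathbb{R}[x,y]_8:\langle L,q^4\rangle\ge0\ \forall q\in\mathbb{R}[x,y]_2\}$. With variables $a,b,c$, $q(a,b,c)=ax^2+bxy+cy^2$ and $\langle L,q(a,b,c)^4\rangle\in\mathbb{R}[a,b,c]_4$ is computed in $x,y$ treating $a,b,c$ as scalars. *)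

theory Defs
  imports "HOL-Computational_Algebra.Polynomial"
begin

text \<open>A binary octic form L in R[x,y]_8 is represented by its coefficient
  function L :: nat => real, where L i is the coefficient of x^i y^(8-i),
  i = 0..8 (values at i > 8 are ignored).\<close>

definition nonzero_form8 :: "(nat \<Rightarrow> real) \<Rightarrow> bool" where
  "nonzero_form8 L \<longleftrightarrow> (\<exists>i\<le>8. L i \<noteq> 0)"

text \<open>Apolarity pairing on R[x,y]_8, extended bilinearly from monomials:
  the pairing of x^i y^(8-i) with x^j y^(8-j) is
  j!(8-j)!/(i!(8-i)!) x^(j-i) y^((8-j)-(8-i)) if i <= j and 8-i <= 8-j, else 0;
  in degree 8 the remaining monomial is x^0 y^0 = 1.\<close>

definition apolar8 :: "(nat \<Rightarrow> real) \<Rightarrow> (nat \<Rightarrow> real) \<Rightarrow> real" where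
  "apolar8 L f = (\<Sum>i\<le>8. \<Sum>j\<le>8. L i * f j *
      (if i \<le> j \<and> 8 - i \<le> 8 - j
       then (fact j * fact (8 - j)) / (fact i * fact (8 - i)) else 0))"

text \<open>Coefficients of q(a,b,c)^4 = (a x^2 + b x y + c y^2)^4: the coefficient of
  x^m y^(8-m) is the coefficient of x^m in the dehomogenisation (c + b x + a x^2)^4.\<close>

definition qpow4 :: "real \<Rightarrow> real \<Rightarrow> real \<Rightarrow> nat \<Rightarrow> real" where
  "qpow4 a b c = coeff ([:c, b, a:] ^ 4)"

definition dual_Sigma4_28 :: "(nat \<Rightarrow> real) \<Rightarrow> bool" where
  "dual_Sigma4_28 L \<longleftrightarrow> (\<forall>a b c. apolar8 L (qpow4 a b c) \<ge> 0)"

definition Fpair :: "(nat \<Rightarrow> real) \<Rightarrow> real \<Rightarrow> real \<Rightarrow> real \<Rightarrow> real" where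
  "Fpair L a b c = apolar8 L (qpow4 a b c)"

definition definite_bqf :: "real \<Rightarrow> real \<Rightarrow> real \<Rightarrow> bool" where
  "definite_bqf a b c \<longleftrightarrow>
     (\<forall>x y. (x, y) \<noteq> (0, 0) \<longrightarrow> a * x^2 + b * x * y + c * y^2 > 0) \<or>
     (\<forall>x y. (x, y) \<noteq> (0, 0) \<longrightarrow> a * x^2 + b * x * y + c * y^2 < 0)"

end

theory Submission imports Defs begin

definition phi :: "(nat \<Rightarrow> real) \<Rightarrow> real poly \<Rightarrow> real" where
  "phi L p = (\<Sum>i\<le>8. L i * coeff p i)"

lemma apolar_eq: "apolar8 L f = (\<Sum>i\<le>8. L i * f i)"
  unfolding apolar8_def
proof (rule sum.cong[OF refl])
  fix i assume i: "i \<in> {..8::nat}"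
  have "(\<Sum>j\<le>8. L i * f j * (if i \<le> j \<and> 8 - i \<le> 8 - j
       then (fact j * fact (8 - j)) / (fact i * fact (8 - i)) else 0)) =
        (\<Sum>j\<le>8. if j = i then L i * f i else 0)"
    using i by (intro sum.cong refl) (auto)
  also have "\<dots> = L i * f i" using i by simp
  finally show "(\<Sum>j\<le>8. L i * f j * (if i \<le> j \<and> 8 - i \<le> 8 - j
       then (fact j * fact (8 - j)) / (fact i * fact (8 - i)) else 0)) = L i * f i" .
qed

lemma Fpair_eq: "Fpair L a b c = phi L ([:c,b,a:]^4)"
  by (simp add: Fpair_def apolar_eq phi_def qpow4_def)

lemma phi_add: "phi L (p + q) = phi L p + phi L q"
  by (simp add: phi_def algebra_simps sum.distrib)
lemma phi_diff: "phi L (p - q) = phi L p - phi L q"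
  by (simp add: phi_def algebra_simps sum_subtractf)
lemma phi_smult: "phi L (smult c p) = c * phi L p"
  by (simp add: phi_def algebra_simps sum_distrib_left)
lemma phi_const_mult: "phi L ([:c:] * p) = c * phi L p"
  by (simp add: phi_smult)
lemma phi_numeral: "phi L (numeral n * p) = numeral n * phi L p"
  by (simp only: numeral_mult_conv_smult phi_smult)

lemma quad_form: "degree (q::real poly) \<le> 2 \<Longrightarrow> q = [:coeff q 0, coeff q 1, coeff q 2:]"
  apply (rule poly_eqI)
  subgoal for n by (cases n; cases "n - 1"; cases "n - 2") (auto simp: coeff_eq_0 coeff_pCons numeral_2_eq_2)
  done

lemma dual_pos: assumes "dual_Sigma4_28 L" "degree q \<le> 2" shows "phi L (q^4) \<ge> 0"
proof -
  have "phi L (q^4) = Fpair L (coeff q 2) (coeff q 1) (coeff q 0)"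
    using quad_form[OF assms(2)] by (simp add: Fpair_eq)
  then show ?thesis using assms(1) by (simp add: dual_Sigma4_28_def Fpair_def)
qed

lemma deriv0:
  fixes \<alpha> \<beta> \<gamma> \<delta> :: real
  assumes "\<forall>t. \<alpha>*t + \<beta>*t^2 + \<gamma>*t^3 + \<delta>*t^4 \<ge> 0"
  shows "\<alpha> = 0"
proof (rule ccontr)
  assume a: "\<alpha> \<noteq> 0"
  define M where "M = \<bar>\<beta>\<bar> + \<bar>\<gamma>\<bar> + \<bar>\<delta>\<bar> + 1"
  define s where "s = min 1 (\<bar>\<alpha>\<bar> / (2*M))"
  have M: "M \<ge> 1" by (simp add: M_def)
  have s0: "s > 0" using a M by (simp add: s_def)
  have s1: "s \<le> 1" by (simp add: s_def)
  have sM: "M * s \<le> \<bar>\<alpha>\<bar>/2" using M by (simp add: s_def min_def field_simps)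
  define t where "t = - sgn \<alpha> * s"
  have at: "\<alpha> * t = - \<bar>\<alpha>\<bar> * s" using a by (simp add: t_def abs_if sgn_if)
  have tabs: "\<bar>t\<bar> = s" using a s0 by (simp add: t_def abs_mult)
  have "\<bar>\<beta>*t^2 + \<gamma>*t^3 + \<delta>*t^4\<bar> \<le> \<bar>\<beta>\<bar>*s^2 + \<bar>\<gamma>\<bar>*s^3 + \<bar>\<delta>\<bar>*s^4"
    by (simp add: abs_mult power_abs tabs abs_triangle_ineq order_trans[OF abs_triangle_ineq])
  also have "\<dots> \<le> M*s^2"
  proof -
    have "s^3 \<le> s^2" "s^4 \<le> s^2" using s0 s1 by (auto simp: power_decreasing)
    hence "\<bar>\<gamma>\<bar>*s^3 \<le> \<bar>\<gamma>\<bar>*s^2" "\<bar>\<delta>\<bar>*s^4 \<le> \<bar>\<delta>\<bar>*s^2"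
      by (auto intro: mult_left_mono)
    moreover have "0 \<le> s^2" by simp
    moreover have "M*s^2 = \<bar>\<beta>\<bar>*s^2 + \<bar>\<gamma>\<bar>*s^2 + \<bar>\<delta>\<bar>*s^2 + s^2" by (simp add: M_def algebra_simps)
    ultimately show ?thesis by linarith
  qed
  also have "\<dots> \<le> \<bar>\<alpha>\<bar>/2 * s" using sM s0 by (simp add: power2_eq_square mult_right_mono)
  finally have X: "\<bar>\<beta>*t^2 + \<gamma>*t^3 + \<delta>*t^4\<bar> \<le> \<bar>\<alpha>\<bar>/2 * s" .
  have pos: "\<bar>\<alpha>\<bar>*s > 0" using a s0 by simp
  have "\<alpha>*t + (\<beta>*t^2 + \<gamma>*t^3 + \<delta>*t^4) < 0"
    using X at pos abs_ge_self[of "\<beta>*t^2 + \<gamma>*t^3 + \<delta>*t^4"] by linarith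
  with assms show False by (metis add.assoc not_le)
qed
lemma quadr: fixes u v :: "'a::idom"
  shows "1260 * (u^2+v^2)^4 = 702*(u^8+v^8) + 22*((u+v)^8+(u-v)^8) + ((u+2*v)^8+(u-2*v)^8+(2*u+v)^8+(2*u-v)^8)"
  by algebra

lemma expand4: fixes l m T :: "'a::idom"
  shows "(l^2 + T*m)^4 = l^8 + 4*(T*(l^6*m)) + 6*(T^2*(l^4*m^2)) + 4*(T^3*(l^2*m^3)) + T^4*m^4"
  by algebra

lemma phi_constpow: "phi L ([:t:]^k * p) = t^k * phi L p"
  by (simp add: poly_const_pow phi_smult)

lemma grad0:
  assumes d: "dual_Sigma4_28 L" and l: "degree l \<le> 1" and z: "phi L (l^8) = 0" and m: "degree m \<le> 2"
  shows "phi L (l^6 * m) = 0"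
proof -
  have "\<forall>t. 4*phi L (l^6*m)*t + 6*phi L (l^4*m^2)*t^2 + 4*phi L (l^2*m^3)*t^3 + phi L (m^4)*t^4 \<ge> 0"
  proof
    fix t
    have deg: "degree (l^2 + [:t:]*m) \<le> 2"
    proof -
      have "degree (l^2) \<le> 2" using l degree_power_le[of l 2] by linarith
      moreover have "degree ([:t:]*m) \<le> 2" using m degree_mult_le[of "[:t:]" m] by simp
      ultimately show ?thesis using degree_add_le by blast
    qed
    have "0 \<le> phi L ((l^2 + [:t:]*m)^4)" by (rule dual_pos[OF d deg])
    also have "\<dots> = 4*phi L (l^6*m)*t + 6*phi L (l^4*m^2)*t^2 + 4*phi L (l^2*m^3)*t^3 + phi L (m^4)*t^4"
      unfolding expand4 by (simp only: phi_add phi_numeral phi_constpow phi_const_mult z) (simp add: algebra_simps)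
    finally show "0 \<le> 4*phi L (l^6*m)*t + 6*phi L (l^4*m^2)*t^2 + 4*phi L (l^2*m^3)*t^3 + phi L (m^4)*t^4" .
  qed
  from deriv0[OF this] show ?thesis by simp
qed

lemma phi_sum: "phi L (sum f A) = (\<Sum>x\<in>A. phi L (f x))"
  by (simp add: phi_def coeff_sum sum_distrib_left sum.swap[of _ A])

lemma phi_xpow: "j \<le> 8 \<Longrightarrow> phi L ([:0,1:]^j) = L j"
proof -
  assume j: "j \<le> 8"
  have "[:0,1:]^j = (monom 1 j :: real poly)" by (simp add: monom_altdef)
  hence "phi L ([:0,1:]^j) = (\<Sum>i\<le>8. L i * (if j = i then 1 else 0))"
    by (simp add: phi_def coeff_monom)
  also have "\<dots> = (\<Sum>i\<le>8. if i = j then L i else 0)" by (intro sum.cong) auto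
  also have "\<dots> = L j" using j by simp
  finally show ?thesis .
qed


lemma ex_U: fixes u v :: "'a::idom"
  shows "(u+v)^6*u^2 = u^8*v^0 + 6*(u^7*v^1) + 15*(u^6*v^2) + 20*(u^5*v^3) + 15*(u^4*v^4) + 6*(u^3*v^5) + u^2*v^6"
  by algebra
lemma ex_UV: fixes u v :: "'a::idom"
  shows "(u+v)^6*(u*v) = u^7*v^1 + 6*(u^6*v^2) + 15*(u^5*v^3) + 20*(u^4*v^4) + 15*(u^3*v^5) + 6*(u^2*v^6) + u^1*v^7"
  by algebra
lemma ex_V: fixes u v :: "'a::idom"
  shows "(u+v)^6*v^2 = u^6*v^2 + 6*(u^5*v^3) + 15*(u^4*v^4) + 20*(u^3*v^5) + 15*(u^2*v^6) + 6*(u^1*v^7) + u^0*v^8"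
  by algebra

lemma main_pos:
  assumes d: "dual_Sigma4_28 L" and nz: "nonzero_form8 L" and a: "a > 0" and D: "4*a*c - b^2 > 0"
  shows "Fpair L a b c \<noteq> 0"
proof
  assume F0: "Fpair L a b c = 0"
  define sa where "sa = sqrt a"
  define sd where "sd = sqrt ((4*a*c - b^2)/(4*a))"
  have sa: "sa > 0" "sa * sa = a" using a by (auto simp: sa_def)
  have sd: "sd > 0" "sd * sd = (4*a*c - b^2)/(4*a)" using a D by (auto simp: sd_def)
  define U where "U = [:b/(2*sa), sa:]"
  define V where "V = [:sd:]"
  have degU: "degree U \<le> 1" by (simp add: U_def)
  have degV: "degree V \<le> 1" by (simp add: V_def)
  have Q: "U^2 + V^2 = [:c,b,a:]"
  proof -
    have "b/(2*sa)*(b/(2*sa)) = b^2/(4*a)" using sa by (simp add: field_simps power2_eq_square)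
    hence "b/(2*sa)*(b/(2*sa)) + sd*sd = c" unfolding sd(2) using a by (simp add: field_simps)
    moreover have "b/(2*sa)*sa + sa*(b/(2*sa)) = b" using sa by (simp add: field_simps)
    ultimately show ?thesis using sa by (simp add: U_def V_def power2_eq_square algebra_simps)
  qed
  have P0: "phi L ((U^2+V^2)^4) = 0" using F0 by (simp add: Q Fpair_eq)
  have pos: "phi L (l^8) \<ge> 0" if "degree l \<le> 1" for l
  proof -
    have "degree (l^2) \<le> 2" using that degree_power_le[of l 2] by linarith
    from dual_pos[OF d this] show ?thesis by (simp add: power_mult[symmetric])
  qed
  have dlin: "degree (p + q) \<le> 1" "degree (p - q) \<le> 1" "degree (2*p + q) \<le> 1" "degree (p + 2*q) \<le> 1"
    "degree (2*p - q) \<le> 1" "degree (p - 2*q) \<le> 1"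
    if "degree p \<le> 1" "degree q \<le> 1" for p q :: "real poly"
    using that by (auto intro!: degree_add_le degree_diff_le simp: numeral_mult_conv_smult)
  have "0 = phi L (1260 * (U^2+V^2)^4)" using P0 by (simp add: phi_numeral)
  also have "\<dots> = 702*phi L (U^8) + 702*phi L (V^8) + 22*phi L ((U+V)^8) + 22*phi L ((U-V)^8)
     + phi L ((U+2*V)^8) + phi L ((U-2*V)^8) + phi L ((2*U+V)^8) + phi L ((2*U-V)^8)"
    unfolding quadr by (simp only: phi_add phi_numeral) (simp add: algebra_simps)
  finally have sum0: "0 = \<dots>" .
  have z: "phi L (U^8) = 0" "phi L (V^8) = 0" "phi L ((U+V)^8) = 0"
    using sum0 pos[OF degU] pos[OF degV] pos[OF dlin(1)[OF degU degV]] pos[OF dlin(2)[OF degU degV]]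
      pos[OF dlin(3)[OF degU degV]] pos[OF dlin(4)[OF degU degV]] pos[OF dlin(5)[OF degU degV]] pos[OF dlin(6)[OF degU degV]]
    by linarith+
  have dq: "degree (U^2) \<le> 2" "degree (U*V) \<le> 2" "degree (V^2) \<le> 2"
    using degU degV degree_power_le[of U 2] degree_power_le[of V 2] degree_mult_le[of U V] by linarith+
  define e where "e k = phi L (U^k * V^(8-k))" for k
  have r1: "U^6*U^2 = U^8*V^0" "U^6*(U*V) = U^7*V^1"
     "V^6*U^2 = U^2*V^6" "V^6*(U*V) = U^1*V^7" "V^6*V^2 = U^0*V^8"
    by (simp_all add: eval_nat_numeral mult_ac)
  have e1: "e 8 = 0" "e 7 = 0" "e 6 = 0" "e 2 = 0" "e 1 = 0" "e 0 = 0"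
    using grad0[OF d degU z(1) dq(1)] grad0[OF d degU z(1) dq(2)]
     grad0[OF d degV z(2) dq(1)] grad0[OF d degV z(2) dq(2)] grad0[OF d degV z(2) dq(3)]
    unfolding r1 by (simp_all add: e_def grad0[OF d degU z(1) dq(3)])
  have UV: "degree (U+V) \<le> 1" by (rule dlin(1)[OF degU degV])
  have "phi L ((U+V)^6*U^2) = e 8 + 6*e 7 + 15*e 6 + 20*e 5 + 15*e 4 + 6*e 3 + e 2"
    unfolding ex_U by (simp only: phi_add phi_numeral) (simp add: e_def)
  moreover have "phi L ((U+V)^6*(U*V)) = e 7 + 6*e 6 + 15*e 5 + 20*e 4 + 15*e 3 + 6*e 2 + e 1"
    unfolding ex_UV by (simp only: phi_add phi_numeral) (simp add: e_def)
  moreover have "phi L ((U+V)^6*V^2) = e 6 + 6*e 5 + 15*e 4 + 20*e 3 + 15*e 2 + 6*e 1 + e 0"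
    unfolding ex_V by (simp only: phi_add phi_numeral) (simp add: e_def)
  ultimately have e2: "e 5 = 0" "e 4 = 0" "e 3 = 0"
    using grad0[OF d UV z(3) dq(1)] grad0[OF d UV z(3) dq(2)] grad0[OF d UV z(3) dq(3)] e1
    by linarith+
  have eall: "e k = 0" if "k \<le> 8" for k
  proof -
    have "k \<in> {0,1,2,3,4,5,6,7,8}" using that by auto
    thus ?thesis using e1 e2 by auto
  qed
  have phiU: "phi L (U^k) = 0" if "k \<le> 8" for k
  proof -
    have "0 = phi L (U^k * V^(8-k))" using eall[OF that] by (simp add: e_def)
    also have "\<dots> = sd^(8-k) * phi L (U^k)" by (simp add: V_def mult.commute[of "U^k"] phi_constpow)
    finally show ?thesis using sd by simp
  qed
  define \<beta> where "\<beta> = b/(2*sa)"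
  have xU: "[:0,1:] = smult (1/sa) (U + [:-\<beta>:])" using sa by (simp add: U_def \<beta>_def)
  have "L j = 0" if j: "j \<le> 8" for j
  proof -
    have "L j = phi L ([:0,1:]^j)" using j by (simp add: phi_xpow)
    also have "\<dots> = (1/sa)^j * phi L ((U + [:-\<beta>:])^j)" by (simp add: xU smult_power phi_smult)
    also have "(U + [:-\<beta>:])^j = (\<Sum>k\<le>j. of_nat (j choose k) * U^k * [:-\<beta>:]^(j-k))"
      by (rule binomial_ring)
    also have "phi L \<dots> = 0"
    proof -
      have "phi L (of_nat (j choose k) * U^k * [:-\<beta>:]^(j-k)) = 0" if "k \<in> {..j}" for k
      proof -
        have "of_nat (j choose k) * U^k * [:-\<beta>:]^(j-k) = smult (of_nat (j choose k) * (-\<beta>)^(j-k)) (U^k)"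
          by (simp add: of_nat_poly poly_const_pow algebra_simps)
        thus ?thesis using phiU[of k] that j by (simp add: phi_smult)
      qed
      thus ?thesis by (simp add: phi_sum)
    qed
    finally show ?thesis by simp
  qed
  with nz show False by (auto simp: nonzero_form8_def)
qed


lemma Fpair_neg: "Fpair L (-a) (-b) (-c) = Fpair L a b c"
proof -
  have h: "[:-c,-b,-a:] = - [:c,b,a:]" by simp
  have "[:-c,-b,-a:]^4 = [:c,b,a:]^4" unfolding h by (rule power_minus_Bit0)
  thus ?thesis by (simp only: Fpair_eq)
qed

lemma posdef:
  fixes a b c :: real
  assumes "\<forall>x y. (x, y) \<noteq> (0, 0) \<longrightarrow> a * x^2 + b * x * y + c * y^2 > 0"
  shows "a > 0 \<and> 4*a*c - b^2 > 0"
proof -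
  have a: "a > 0" using assms[rule_format, of 1 0] by simp
  have "a * (-b/(2*a))^2 + b * (-b/(2*a)) * 1 + c * 1^2 > 0" using assms[rule_format, of "-b/(2*a)" 1] by simp
  hence "c - b^2/(4*a) > 0" using a by (simp add: power2_eq_square field_simps)
  hence "4*a*c - b^2 > 0" using a by (simp add: field_simps)
  with a show ?thesis by simp
qed

theorem mainTheorem11:
  fixes L :: "nat \<Rightarrow> real" and a b c :: real
  assumes "dual_Sigma4_28 L"
    and "nonzero_form8 L"
    and "definite_bqf a b c"
  shows "Fpair L a b c \<noteq> 0"
proof -
  from assms(3) have
      "(\<forall>x y. (x, y) \<noteq> (0, 0) \<longrightarrow> a * x^2 + b * x * y + c * y^2 > 0) \<or>
       (\<forall>x y. (x, y) \<noteq> (0, 0) \<longrightarrow> a * x^2 + b * x * y + c * y^2 < 0)"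
    unfolding definite_bqf_def .
  then show ?thesis
  proof
    assume P: "\<forall>x y. (x, y) \<noteq> (0, 0) \<longrightarrow> a * x^2 + b * x * y + c * y^2 > 0"
    from posdef[OF P] show ?thesis using main_pos[OF assms(1,2)] by blast
  next
    assume N: "\<forall>x y. (x, y) \<noteq> (0, 0) \<longrightarrow> a * x^2 + b * x * y + c * y^2 < 0"
    have N': "\<forall>x y. (x, y) \<noteq> (0, 0) \<longrightarrow> (-a) * x^2 + (-b) * x * y + (-c) * y^2 > 0"
    proof (intro allI impI)
      fix x y :: real assume "(x, y) \<noteq> (0, 0)"
      with N have "a * x^2 + b * x * y + c * y^2 < 0" by blast
      thus "(-a) * x^2 + (-b) * x * y + (-c) * y^2 > 0" by linarith
    qed
    from posdef[OF N'] have "Fpair L (-a) (-b) (-c) \<noteq> 0" using main_pos[OF assms(1,2)] by simp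
    thus ?thesis by (simp add: Fpair_neg)
  qed
qed

end
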